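(* Let $\mathcal D_2(\lambda)$ be the distribution defined in the context, with $\lambda\in(0,\min(\alpha,\beta/(3d)))$. Then $\mathcal D_2(\lambda)$ is a $(\gamma,V)$-stable distribution for $V:=\mathbf X_1\setminus\{X_a\}$ and for every $\gamma>0$ with $\gamma\le\beta-3d\lambda$.
   Context: Entropies use the natural logarithm; $k$ is a fixed positive integer. For a finite set of discrete random variables $\mathbf Y$, a family is $\langle Y,\Pi\rangle$ with $Y\in\mathbf Y$, $\Pi\subseteq\mathbf Y\setminus\{Y\}$, $|\Pi|\le k$, $H(\langle Y,\Pi\rangle)=H(Y\mid\Pi)$; DAGs over $\mathbf Y$ with in-degree at most $k$ are identified with their sets of families, and a set $F$ of families has score $\mathcal S(F)=-\sum_{f\in F}H(f)$. Markov-equivalent DAGs (same conditional independence constraints) form equivalence classes (ECs) with a common score; an optimal EC maximizes the score. Construction. $\mathcal D_1$ is a distribution over a finite set $\mathbf X_1$ of at least $k$ discrete variables, containing a variable $X_a$, such that for some $\alpha,\beta>0$: (I) among DAGs over $\mathbf X_1$ with in-degree $\le k$, $\mathcal D_1$ has a unique optimal EC and the score difference between it and the next-best EC is at least $\beta$; (II) $X_a$ has no children in any structure of the optimal EC; (III) $H(X_a\mid\mathbf X_1\setminus\{X_a\})=\alpha$. Let $\mathbf X=\mathbf X_1\cup\{X_b\}$, $d=|\mathbf X|$. For $\lambda\in(0,\min(\alpha,\beta/(3d)))$, $\mathcal D_2(\lambda)$ is a distribution on $\mathbf X$ whose marginal on $\mathbf X_1$ is $\mathcal D_1$ and: (IV)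 there is a hidden Bernoulli variable $C$ independent of $\mathbf X_1$ with $P[X_b=X_a\mid C=1]=1$ and $X_b$ independent of $\mathbf X_1$ given $C=0$; (V) $P(C=1)$ is such that $\max(H(X_b\mid X_a),H(X_a\mid X_b))=\lambda$. $(\gamma,V)$-stable: with $\mathcal G_{d,k}$ the DAGs over $\mathbf X$ with in-degree $\le k$ and $\mathcal S^*=\max_{G\in\mathcal G_{d,k}}\mathcal S(G)$, for $\gamma>0$ and $V\subseteq\mathbf X$ a distribution is $(\gamma,V)$-stable if (1) in every $G\in\mathcal G_{d,k}$ with $\mathcal S(G)\ge\mathcal S^*-\gamma$ all parents of every variable in $V$ are in $V$; (2) for the marginal on $V$ (over DAGs on $V$ with in-degree $\le k$) there is a unique optimal EC and the score gap between the best and second-best EC is more than $\gamma$. *)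

theory Defs
  imports "HOL-Probability.Probability"
begin

text \<open>A joint distribution is a pmf
on full assignments 'v => 'a; only the coordinates of the variables under consideration
matter (all quantities are computed through marginals).\<close>

definition proj :: "'v set \<Rightarrow> ('v \<Rightarrow> 'a) \<Rightarrow> ('v \<Rightarrow> 'a)" where
  "proj S \<omega> = (\<lambda>v. if v \<in> S then \<omega> v else undefined)"

definition marg :: "('v \<Rightarrow> 'a) pmf \<Rightarrow> 'v set \<Rightarrow> ('v \<Rightarrow> 'a) pmf" where
  "marg P S = map_pmf (proj S) P"

definition ent :: "('v \<Rightarrow> 'a) pmf \<Rightarrow> 'v set \<Rightarrow> real" where
  "ent P S = - (\<Sum>x\<in>set_pmf (marg P S). pmf (marg P S) x * ln (pmf (marg P S) x))"

definition cond_ent :: "('v \<Rightarrow> 'a) pmf \<Rightarrow> 'v \<Rightarrow> 'v set \<Rightarrow> real" where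
  "cond_ent P Y Pa = ent P (insert Y Pa) - ent P Pa"

text \<open>A DAG over V is given by its parent map G (G v = parent set of v); the family set is
{<v, G v> | v in V}. Parent sets outside V are normalised to be empty.\<close>

definition edges :: "'v set \<Rightarrow> ('v \<Rightarrow> 'v set) \<Rightarrow> ('v \<times> 'v) set" where
  "edges V G = {(u, w). w \<in> V \<and> u \<in> G w}"

definition is_dag :: "nat \<Rightarrow> 'v set \<Rightarrow> ('v \<Rightarrow> 'v set) \<Rightarrow> bool" where
  "is_dag k V G \<longleftrightarrow>
     (\<forall>v\<in>V. G v \<subseteq> V - {v} \<and> card (G v) \<le> k) \<and>
     (\<forall>v. v \<notin> V \<longrightarrow> G v = {}) \<and>
     acyclic (edges V G)"

definition score :: "('v \<Rightarrow> 'a) pmf \<Rightarrow> 'v set \<Rightarrow> ('v \<Rightarrow> 'v set) \<Rightarrow> real" where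
  "score P V G = - (\<Sum>v\<in>V. cond_ent P v (G v))"

definition desc :: "'v set \<Rightarrow> ('v \<Rightarrow> 'v set) \<Rightarrow> 'v \<Rightarrow> 'v set" where
  "desc V G v = {w. (v, w) \<in> (edges V G)\<^sup>*}"

definition adj :: "'v set \<Rightarrow> ('v \<Rightarrow> 'v set) \<Rightarrow> 'v \<Rightarrow> 'v \<Rightarrow> bool" where
  "adj V G u w \<longleftrightarrow> (u, w) \<in> edges V G \<or> (w, u) \<in> edges V G"

definition active_trail :: "'v set \<Rightarrow> ('v \<Rightarrow> 'v set) \<Rightarrow> 'v set \<Rightarrow> 'v list \<Rightarrow> bool" where
  "active_trail V G Z p \<longleftrightarrow>
     length p \<ge> 2 \<and> distinct p \<and> set p \<subseteq> V \<and>
     (\<forall>i. Suc i < length p \<longrightarrow> adj V G (p ! i) (p ! Suc i)) \<and>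
     (\<forall>i. 0 < i \<and> Suc i < length p \<longrightarrow>
        (if (p ! (i - 1), p ! i) \<in> edges V G \<and> (p ! Suc i, p ! i) \<in> edges V G
         then desc V G (p ! i) \<inter> Z \<noteq> {}
         else p ! i \<notin> Z))"

definition dsep :: "'v set \<Rightarrow> ('v \<Rightarrow> 'v set) \<Rightarrow> 'v \<Rightarrow> 'v \<Rightarrow> 'v set \<Rightarrow> bool" where
  "dsep V G x y Z \<longleftrightarrow> \<not> (\<exists>p. active_trail V G Z p \<and> hd p = x \<and> last p = y)"

definition markov_equiv :: "'v set \<Rightarrow> ('v \<Rightarrow> 'v set) \<Rightarrow> ('v \<Rightarrow> 'v set) \<Rightarrow> bool" where
  "markov_equiv V G1 G2 \<longleftrightarrow>
     (\<forall>x\<in>V. \<forall>y\<in>V. \<forall>Z. x \<noteq> y \<and> Z \<subseteq> V - {x, y} \<longrightarrow>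
        (dsep V G1 x y Z \<longleftrightarrow> dsep V G2 x y Z))"

definition unique_opt_EC_gap_ge :: "nat \<Rightarrow> ('v \<Rightarrow> 'a) pmf \<Rightarrow> 'v set \<Rightarrow> ('v \<Rightarrow> 'v set) \<Rightarrow> real \<Rightarrow> bool" where
  "unique_opt_EC_gap_ge k P V G0 b \<longleftrightarrow>
     is_dag k V G0 \<and>
     (\<forall>G. is_dag k V G \<longrightarrow> score P V G \<le> score P V G0) \<and>
     (\<forall>G. is_dag k V G \<and> score P V G = score P V G0 \<longrightarrow> markov_equiv V G G0) \<and>
     (\<forall>G. is_dag k V G \<and> \<not> markov_equiv V G G0 \<longrightarrow> score P V G \<le> score P V G0 - b)"

definition unique_opt_EC_gap_gt :: "nat \<Rightarrow> ('v \<Rightarrow> 'a) pmf \<Rightarrow> 'v set \<Rightarrow> ('v \<Rightarrow> 'v set) \<Rightarrow> real \<Rightarrow> bool" where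
  "unique_opt_EC_gap_gt k P V G0 b \<longleftrightarrow>
     is_dag k V G0 \<and>
     (\<forall>G. is_dag k V G \<longrightarrow> score P V G \<le> score P V G0) \<and>
     (\<forall>G. is_dag k V G \<and> score P V G = score P V G0 \<longrightarrow> markov_equiv V G G0) \<and>
     (\<forall>G. is_dag k V G \<and> \<not> markov_equiv V G G0 \<longrightarrow> score P V G < score P V G0 - b)"

definition best_score :: "nat \<Rightarrow> ('v \<Rightarrow> 'a) pmf \<Rightarrow> 'v set \<Rightarrow> real" where
  "best_score k P X = Max (score P X ` {G. is_dag k X G})"

definition stable :: "nat \<Rightarrow> 'v set \<Rightarrow> ('v \<Rightarrow> 'a) pmf \<Rightarrow> real \<Rightarrow> 'v set \<Rightarrow> bool" where
  "stable k X P \<gamma> V \<longleftrightarrow>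
     (\<forall>G. is_dag k X G \<and> score P X G \<ge> best_score k P X - \<gamma> \<longrightarrow>
          (\<forall>v\<in>V. G v \<subseteq> V)) \<and>
     (\<exists>G0. unique_opt_EC_gap_gt k (marg P V) V G0 \<gamma>)"

end

theory Submission
  imports Defs
begin

definition eqon :: "'v set \<Rightarrow> ('v \<Rightarrow> 'a) \<Rightarrow> ('v \<Rightarrow> 'a) \<Rightarrow> bool" where
  "eqon S x y \<longleftrightarrow> (\<forall>v\<in>S. x v = y v)"

definition qq :: "('v \<Rightarrow> 'a) pmf \<Rightarrow> 'v set \<Rightarrow> ('v \<Rightarrow> 'a) \<Rightarrow> real" where
  "qq P S w = (\<Sum>w'\<in>set_pmf P. if eqon S w' w then pmf P w' else 0)"

lemma proj_eq_iff: "proj S x = proj S y \<longleftrightarrow> eqon S x y"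
  by (auto simp: proj_def eqon_def fun_eq_iff)

lemma eqon_sym: "eqon S x y = eqon S y x" by (auto simp: eqon_def)
lemma eqon_trans: "eqon S x y \<Longrightarrow> eqon S y z \<Longrightarrow> eqon S x z" by (auto simp: eqon_def)
lemma eqon_refl[simp]: "eqon S x x" by (auto simp: eqon_def)
lemma eqon_mono: "eqon T x y \<Longrightarrow> S \<subseteq> T \<Longrightarrow> eqon S x y" by (auto simp: eqon_def)
lemma eqon_Un: "eqon (S \<union> T) x y \<longleftrightarrow> eqon S x y \<and> eqon T x y" by (auto simp: eqon_def)

lemma qq_cong: "eqon S w w2 \<Longrightarrow> qq P S w = qq P S w2"
  unfolding qq_def by (intro sum.cong refl) (meson eqon_sym eqon_trans)

lemma pmf_marg_proj:
  assumes fin: "finite (set_pmf P)"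
  shows "pmf (marg P S) (proj S w) = qq P S w"
proof -
  have "pmf (marg P S) (proj S w) = measure_pmf.prob P (proj S -` {proj S w} \<inter> set_pmf P)"
    unfolding marg_def pmf_map measure_Int_set_pmf ..
  also have "\<dots> = sum (pmf P) (proj S -` {proj S w} \<inter> set_pmf P)"
    using fin by (simp add: measure_measure_pmf_finite)
  also have "\<dots> = qq P S w"
  proof -
    have "proj S -` {proj S w} = {w'. eqon S w' w}" by (auto simp: proj_eq_iff)
    then show ?thesis unfolding qq_def using fin by (simp add: sum.If_cases Int_commute)
  qed
  finally show ?thesis .
qed

lemma qq_pos:
  assumes fin: "finite (set_pmf P)" and w: "w \<in> set_pmf P"
  shows "pmf P w \<le> qq P S w" "0 < qq P S w"
proof -
  have "pmf P w = (if eqon S w w then pmf P w else 0)" by simp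
  also have "\<dots> \<le> qq P S w" unfolding qq_def
    by (rule member_le_sum[OF w _ fin]) auto
  finally show "pmf P w \<le> qq P S w" .
  then show "0 < qq P S w" using w by (smt (verit) set_pmf_iff pmf_nonneg)
qed

lemma qq_nonneg: "0 \<le> qq P S w"
  unfolding qq_def by (intro sum_nonneg) auto

lemma ent_qq:
  assumes fin: "finite (set_pmf P)"
  shows "ent P S = - (\<Sum>w\<in>set_pmf P. pmf P w * ln (qq P S w))"
proof -
  let ?W = "set_pmf P"
  have "(\<Sum>w\<in>?W. pmf P w * ln (qq P S w)) =
      (\<Sum>x\<in>proj S ` ?W. \<Sum>w\<in>{w\<in>?W. proj S w = x}. pmf P w * ln (qq P S w))"
    using fin by (rule sum.image_gen)
  also have "\<dots> = (\<Sum>x\<in>proj S ` ?W. pmf (marg P S) x * ln (pmf (marg P S) x))"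
  proof (rule sum.cong[OF refl])
    fix x assume "x \<in> proj S ` ?W"
    have "(\<Sum>w\<in>{w\<in>?W. proj S w = x}. pmf P w * ln (qq P S w))
        = (\<Sum>w\<in>{w\<in>?W. proj S w = x}. pmf P w * ln (pmf (marg P S) x))"
      by (intro sum.cong refl) (simp add: pmf_marg_proj[OF fin, symmetric])
    also have "\<dots> = (\<Sum>w\<in>{w\<in>?W. proj S w = x}. pmf P w) * ln (pmf (marg P S) x)"
      by (simp add: sum_distrib_right)
    also have "(\<Sum>w\<in>{w\<in>?W. proj S w = x}. pmf P w) = pmf (marg P S) x"
    proof -
      have "pmf (marg P S) x = measure_pmf.prob P (proj S -` {x} \<inter> ?W)"
        unfolding marg_def pmf_map measure_Int_set_pmf ..
      also have "\<dots> = sum (pmf P) (proj S -` {x} \<inter> ?W)"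
        using fin by (simp add: measure_measure_pmf_finite)
      also have "proj S -` {x} \<inter> ?W = {w\<in>?W. proj S w = x}" by auto
      finally show ?thesis by simp
    qed
    finally show "(\<Sum>w\<in>{w\<in>?W. proj S w = x}. pmf P w * ln (qq P S w))
        = pmf (marg P S) x * ln (pmf (marg P S) x)" .
  qed
  finally show ?thesis unfolding ent_def marg_def by simp
qed

lemma sum_pmf_W: "finite (set_pmf P) \<Longrightarrow> (\<Sum>w\<in>set_pmf P. pmf P w) = 1"
  by (rule sum_pmf_eq_1) auto

lemma ent_mono:
  assumes fin: "finite (set_pmf P)" and ST: "S \<subseteq> T"
  shows "ent P S \<le> ent P T"
proof -
  have "(\<Sum>w\<in>set_pmf P. pmf P w * ln (qq P T w)) \<le> (\<Sum>w\<in>set_pmf P. pmf P w * ln (qq P S w))"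
  proof (rule sum_mono)
    fix w assume w: "w \<in> set_pmf P"
    have "qq P T w \<le> qq P S w" unfolding qq_def
      by (rule sum_mono) (use eqon_mono[OF _ ST] in auto)
    then have "ln (qq P T w) \<le> ln (qq P S w)" using qq_pos[OF fin w] by simp
    then show "pmf P w * ln (qq P T w) \<le> pmf P w * ln (qq P S w)"
      by (simp add: mult_left_mono)
  qed
  then show ?thesis unfolding ent_qq[OF fin] by simp
qed

lemma inner_bound:
  assumes fin: "finite (set_pmf P)" and w1: "w1 \<in> set_pmf P"
  shows "(\<Sum>w\<in>set_pmf P. if eqon S w1 w \<and> eqon T w2 w
            then pmf P w / (qq P (S \<union> T) w * qq P (S \<inter> T) w) else 0)
         \<le> (if eqon (S \<inter> T) w1 w2 then 1 / qq P (S \<inter> T) w1 else 0)"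
proof (cases "\<exists>w0\<in>set_pmf P. eqon S w1 w0 \<and> eqon T w2 w0")
  case True
  then obtain w0 where w0: "w0 \<in> set_pmf P" "eqon S w1 w0" "eqon T w2 w0" by blast
  have I12: "eqon (S \<inter> T) w1 w2"
    using w0 by (auto simp: eqon_def)
  have cond: "eqon S w1 w \<and> eqon T w2 w \<longleftrightarrow> eqon (S \<union> T) w w0" for w
    using w0 by (auto simp: eqon_def)
  have "(\<Sum>w\<in>set_pmf P. if eqon S w1 w \<and> eqon T w2 w
            then pmf P w / (qq P (S \<union> T) w * qq P (S \<inter> T) w) else 0)
      = (\<Sum>w\<in>set_pmf P. (if eqon (S \<union> T) w w0 then pmf P w else 0) / (qq P (S \<union> T) w0 * qq P (S \<inter> T) w1))"
  proof (rule sum.cong[OF refl])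
    fix w assume "w \<in> set_pmf P"
    show "(if eqon S w1 w \<and> eqon T w2 w
            then pmf P w / (qq P (S \<union> T) w * qq P (S \<inter> T) w) else 0)
        = (if eqon (S \<union> T) w w0 then pmf P w else 0) / (qq P (S \<union> T) w0 * qq P (S \<inter> T) w1)"
    proof (cases "eqon (S \<union> T) w w0")
      case True
      then have "qq P (S \<union> T) w = qq P (S \<union> T) w0" by (rule qq_cong)
      moreover have "eqon (S \<inter> T) w w1" using True w0 by (auto simp: eqon_def)
      then have "qq P (S \<inter> T) w = qq P (S \<inter> T) w1" by (rule qq_cong)
      ultimately show ?thesis using True cond by simp
    qed (use cond in simp)
  qed
  also have "\<dots> = qq P (S \<union> T) w0 / (qq P (S \<union> T) w0 * qq P (S \<inter> T) w1)"
    unfolding qq_def sum_divide_distrib[symmetric] by simp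
  also have "\<dots> = 1 / qq P (S \<inter> T) w1"
    using qq_pos(2)[OF fin w0(1), of "S \<union> T"] by simp
  finally show ?thesis using I12 by simp
next
  case False
  then have "(\<Sum>w\<in>set_pmf P. if eqon S w1 w \<and> eqon T w2 w
            then pmf P w / (qq P (S \<union> T) w * qq P (S \<inter> T) w) else 0) = 0"
    by (intro sum.neutral) auto
  then show ?thesis using qq_nonneg[of P "S \<inter> T" w1] by simp
qed

lemma ent_submod:
  assumes fin: "finite (set_pmf P)"
  shows "ent P (S \<union> T) + ent P (S \<inter> T) \<le> ent P S + ent P T"
proof -
  let ?W = "set_pmf P" and ?p = "pmf P"
  let ?S = "qq P S" and ?T = "qq P T" and ?U = "qq P (S \<union> T)" and ?I = "qq P (S \<inter> T)"
  define r where "r w = ?S w * ?T w / (?U w * ?I w)" for w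
  have pos: "0 < ?S w" "0 < ?T w" "0 < ?U w" "0 < ?I w" if "w \<in> ?W" for w
    using qq_pos(2)[OF fin that] by auto
  have rpos: "0 < r w" if "w \<in> ?W" for w using pos[OF that] unfolding r_def by simp
  have key: "(\<Sum>w\<in>?W. ?p w * r w) \<le> 1"
  proof -
    have "(\<Sum>w\<in>?W. ?p w * r w) = (\<Sum>w\<in>?W. \<Sum>w1\<in>?W. \<Sum>w2\<in>?W.
        (if eqon S w1 w \<and> eqon T w2 w then ?p w1 * ?p w2 * (?p w / (?U w * ?I w)) else 0))"
    proof (rule sum.cong[OF refl])
      fix w assume "w \<in> ?W"
      have "?p w * r w = ?S w * ?T w * (?p w / (?U w * ?I w))" unfolding r_def by simp
      also have "\<dots> = (\<Sum>w1\<in>?W. \<Sum>w2\<in>?W. (if eqon S w1 w then ?p w1 else 0) * (if eqon T w2 w then ?p w2 else 0)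
             * (?p w / (?U w * ?I w)))"
      proof -
        have "?S w * ?T w = (\<Sum>w1\<in>?W. \<Sum>w2\<in>?W. (if eqon S w1 w then ?p w1 else 0) * (if eqon T w2 w then ?p w2 else 0))"
          unfolding qq_def sum_product ..
        then show ?thesis by (simp only: sum_distrib_right)
      qed
      also have "\<dots> = (\<Sum>w1\<in>?W. \<Sum>w2\<in>?W.
        (if eqon S w1 w \<and> eqon T w2 w then ?p w1 * ?p w2 * (?p w / (?U w * ?I w)) else 0))"
        by (intro sum.cong refl) auto
      finally show "?p w * r w = \<dots>" .
    qed
    also have "\<dots> = (\<Sum>w1\<in>?W. \<Sum>w2\<in>?W. \<Sum>w\<in>?W.
        (if eqon S w1 w \<and> eqon T w2 w then ?p w1 * ?p w2 * (?p w / (?U w * ?I w)) else 0))"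
      by (subst sum.swap) (subst (2) sum.swap, rule refl)
    also have "\<dots> = (\<Sum>w1\<in>?W. \<Sum>w2\<in>?W. ?p w1 * ?p w2 * (\<Sum>w\<in>?W.
        (if eqon S w1 w \<and> eqon T w2 w then ?p w / (?U w * ?I w) else 0)))"
      by (simp add: sum_distrib_left if_distrib cong: if_cong)
    also have "\<dots> \<le> (\<Sum>w1\<in>?W. \<Sum>w2\<in>?W. ?p w1 * ?p w2 * (if eqon (S \<inter> T) w1 w2 then 1 / ?I w1 else 0))"
      by (intro sum_mono mult_left_mono inner_bound[OF fin]) auto
    also have "\<dots> = (\<Sum>w1\<in>?W. ?p w1 / ?I w1 * ?I w1)"
    proof (rule sum.cong[OF refl])
      fix w1 assume "w1 \<in> ?W"
      have "(\<Sum>w2\<in>?W. ?p w1 * ?p w2 * (if eqon (S \<inter> T) w1 w2 then 1 / ?I w1 else 0))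
          = ?p w1 / ?I w1 * (\<Sum>w2\<in>?W. if eqon (S \<inter> T) w2 w1 then ?p w2 else 0)"
        unfolding sum_distrib_left by (intro sum.cong refl) (auto simp: eqon_sym)
      then show "(\<Sum>w2\<in>?W. ?p w1 * ?p w2 * (if eqon (S \<inter> T) w1 w2 then 1 / ?I w1 else 0))
          = ?p w1 / ?I w1 * ?I w1" unfolding qq_def by simp
    qed
    also have "\<dots> = (\<Sum>w1\<in>?W. ?p w1)"
      by (intro sum.cong refl) (use pos in force)
    also have "\<dots> = 1" using sum_pmf_W[OF fin] .
    finally show ?thesis .
  qed
  have "ent P S + ent P T - ent P (S \<union> T) - ent P (S \<inter> T)
      = - (\<Sum>w\<in>?W. ?p w * ln (r w))"
  proof -
    have "ln (r w) = ln (?S w) + ln (?T w) - ln (?U w) - ln (?I w)" if "w \<in> ?W" for w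
      using pos[OF that] unfolding r_def by (simp add: ln_div ln_mult)
    then have "(\<Sum>w\<in>?W. ?p w * ln (r w)) = (\<Sum>w\<in>?W. ?p w * ln (?S w) + ?p w * ln (?T w)
         - ?p w * ln (?U w) - ?p w * ln (?I w))"
      by (intro sum.cong refl) (simp add: right_diff_distrib distrib_left)
    then show ?thesis unfolding ent_qq[OF fin] by (simp add: sum.distrib sum_subtractf)
  qed
  also have "\<dots> \<ge> - (\<Sum>w\<in>?W. ?p w * (r w - 1))"
    by (intro le_imp_neg_le sum_mono mult_left_mono ln_le_minus_one rpos) auto
  also have "- (\<Sum>w\<in>?W. ?p w * (r w - 1)) = 1 - (\<Sum>w\<in>?W. ?p w * r w)"
    using sum_pmf_W[OF fin] by (simp add: algebra_simps sum_subtractf)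
  finally show ?thesis using key by linarith
qed

lemma cond_nonneg:
  assumes fin: "finite (set_pmf P)"
  shows "0 \<le> cond_ent P Y Pa"
  unfolding cond_ent_def using ent_mono[OF fin, of Pa "insert Y Pa"] by auto

lemma cond_repl:
  assumes fin: "finite (set_pmf P)" and Ya: "Y \<noteq> a" and ab: "a \<noteq> b" and bP: "b \<in> Pa"
  shows "cond_ent P Y (insert a (Pa - {b})) \<le> cond_ent P Y Pa + cond_ent P b {a}"
proof -
  let ?h = "ent P" and ?B = "insert a (Pa - {b})"
  have 1: "?h (insert Y ?B) \<le> ?h (insert Y (insert a Pa))"
    by (rule ent_mono[OF fin]) auto
  have 2: "?h (insert Y (insert a Pa)) + ?h Pa \<le> ?h (insert Y Pa) + ?h (insert a Pa)"
  proof -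
    have "insert Y Pa \<union> insert a Pa = insert Y (insert a Pa)" by auto
    moreover have "insert Y Pa \<inter> insert a Pa = Pa" using Ya by auto
    moreover note ent_submod[OF fin, of "insert Y Pa" "insert a Pa"]
    ultimately show ?thesis by simp
  qed
  have 3: "?h (insert a Pa) + ?h {a} \<le> ?h (insert b {a}) + ?h ?B"
  proof -
    have U: "insert b {a} \<union> ?B = insert a Pa" using bP by auto
    have I: "insert b {a} \<inter> ?B = {a}" using ab by auto
    have "ent P (insert b {a} \<union> ?B) + ent P (insert b {a} \<inter> ?B) \<le> ent P (insert b {a}) + ent P ?B"
      by (rule ent_submod[OF fin])
    then show ?thesis unfolding U I .
  qed
  show ?thesis unfolding cond_ent_def using 1 2 3 by linarith
qed

lemma cond_swap:
  assumes fin: "finite (set_pmf P)" and ab: "a \<noteq> b" and aP: "a \<notin> Pa"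
  shows "cond_ent P a Pa \<le> cond_ent P b Pa + cond_ent P a {b}"
proof -
  let ?h = "ent P"
  have 1: "?h (insert a Pa) \<le> ?h (insert a (insert b Pa))"
    by (rule ent_mono[OF fin]) auto
  have 2: "?h (insert a (insert b Pa)) + ?h {b} \<le> ?h (insert a {b}) + ?h (insert b Pa)"
  proof -
    have U: "insert a {b} \<union> insert b Pa = insert a (insert b Pa)" by auto
    have I: "insert a {b} \<inter> insert b Pa = {b}" using ab aP by auto
    have "ent P (insert a {b} \<union> insert b Pa) + ent P (insert a {b} \<inter> insert b Pa) \<le> ent P (insert a {b}) + ent P (insert b Pa)"
      by (rule ent_submod[OF fin])
    then show ?thesis unfolding U I .
  qed
  show ?thesis unfolding cond_ent_def using 1 2 by linarith
qed

lemma marg_marg: "S \<subseteq> T \<Longrightarrow> marg (marg P T) S = marg P S"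
  unfolding marg_def map_pmf_comp
  by (rule arg_cong[where f="\<lambda>f. map_pmf f P"]) (auto simp: proj_def fun_eq_iff)

lemma ent_marg: "S \<subseteq> T \<Longrightarrow> ent (marg P T) S = ent P S"
  unfolding ent_def marg_marg by simp

lemma cond_ent_marg: "insert v S \<subseteq> T \<Longrightarrow> cond_ent (marg P T) v S = cond_ent P v S"
  unfolding cond_ent_def by (simp add: ent_marg)

lemma ent_transfer: "marg P1 T = marg P2 T \<Longrightarrow> S \<subseteq> T \<Longrightarrow> ent P1 S = ent P2 S"
  using ent_marg[of S T P1] ent_marg[of S T P2] by simp

lemma cond_transfer: "marg P1 T = marg P2 T \<Longrightarrow> insert v S \<subseteq> T \<Longrightarrow> cond_ent P1 v S = cond_ent P2 v S"
  unfolding cond_ent_def using ent_transfer[of P1 T P2] by auto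

section \<open>Graph lemmas\<close>

lemma acyclic_via_map:
  assumes R: "acyclic R" and S: "\<And>u w. (u, w) \<in> S \<Longrightarrow> (f u, f w) \<in> R\<^sup>+"
  shows "acyclic S"
proof -
  have "(f x, f y) \<in> R\<^sup>+" if "(x, y) \<in> S\<^sup>+" for x y
    using that
  proof (induction rule: trancl_induct)
    case (base y) then show ?case using S by blast
  next
    case (step y z) then show ?case using S by (meson trancl_trans)
  qed
  then show ?thesis using R unfolding acyclic_def by blast
qed

lemma finite_dags:
  assumes "finite X"
  shows "finite {G. is_dag k X G}"
proof -
  have inj: "inj_on (\<lambda>G. restrict G X) {G. is_dag k X G}"
  proof (rule inj_onI)
    fix G H assume "G \<in> {G. is_dag k X G}" "H \<in> {G. is_dag k X G}" "restrict G X = restrict H X"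
    then have g: "\<forall>v. v \<notin> X \<longrightarrow> G v = {}" "\<forall>v. v \<notin> X \<longrightarrow> H v = {}"
      and r: "\<And>v. restrict G X v = restrict H X v" unfolding is_dag_def by auto
    show "G = H"
    proof
      fix v show "G v = H v"
        using g r[of v] by (cases "v \<in> X") auto
    qed
  qed
  have "(\<lambda>G. restrict G X) ` {G. is_dag k X G} \<subseteq> PiE X (\<lambda>_. Pow X)"
    by (auto simp: is_dag_def) blast
  moreover have "finite (PiE X (\<lambda>_. Pow X))" using assms by (intro finite_PiE) auto
  ultimately show ?thesis using finite_imageD[OF _ inj] finite_subset by blast
qed

lemma best_score_ge:
  assumes "finite X" "is_dag k X G"
  shows "score P X G \<le> best_score k P X"
  unfolding best_score_def using assms finite_dags[OF assms(1)] by (intro Max_ge) auto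

lemma sink_rtrancl:
  assumes F: "\<And>u w. (u, w) \<in> F \<Longrightarrow> w = a" and out: "\<And>w. (a, w) \<notin> R \<union> F"
    and xy: "(x, y) \<in> (R \<union> F)\<^sup>*"
  shows "y = a \<or> (x, y) \<in> R\<^sup>*"
  using xy
proof (induction rule: rtrancl_induct)
  case base then show ?case by simp
next
  case (step y z)
  then show ?case using F out by (metis Un_iff rtrancl.rtrancl_into_rtrancl)
qed

lemma sink_trancl:
  assumes F: "\<And>u w. (u, w) \<in> F \<Longrightarrow> w = a" and out: "\<And>w. (a, w) \<notin> R \<union> F"
    and xy: "(x, y) \<in> (R \<union> F)\<^sup>+"
  shows "y = a \<or> (x, y) \<in> R\<^sup>+"
  using xy
proof (induction rule: trancl_induct)
  case (base y) then show ?case using F by blast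
next
  case (step y z)
  then show ?case using F out by (metis Un_iff trancl.trancl_into_trancl)
qed

locale sinkext =
  fixes V :: "'v set" and H :: "'v \<Rightarrow> 'v set" and a :: 'v and Pa :: "'v set"
  assumes HV: "\<And>v. v \<in> V \<Longrightarrow> H v \<subseteq> V"
    and Hout: "\<And>v. v \<notin> V \<Longrightarrow> H v = {}"
    and aV: "a \<notin> V" and PaV: "Pa \<subseteq> V"
begin

abbreviation "H' \<equiv> H(a := Pa)"
abbreviation "X1 \<equiv> insert a V"
abbreviation "F \<equiv> {(u, a) | u. u \<in> Pa}"

lemma edges_eq: "edges X1 H' = edges V H \<union> F"
  unfolding edges_def using aV Hout by auto

lemma F_to: "(u, w) \<in> F \<Longrightarrow> w = a" by auto

lemma no_out: "(a, w) \<notin> edges V H \<union> F"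
  unfolding edges_def using HV PaV aV by auto

lemma acyclic_ext: "acyclic (edges V H) \<Longrightarrow> acyclic (edges X1 H')"
  unfolding acyclic_def edges_eq
proof (intro allI notI)
  fix x assume ac: "\<forall>x. (x, x) \<notin> (edges V H)\<^sup>+" and xx: "(x, x) \<in> (edges V H \<union> F)\<^sup>+"
  show False
  proof (cases "x = a")
    case True
    have "(a, a) \<in> (edges V H \<union> F)\<^sup>+" using xx True by simp
    then have "\<exists>z. (a, z) \<in> edges V H \<union> F \<and> (z, a) \<in> (edges V H \<union> F)\<^sup>*" by (rule tranclD)
    then show False using no_out by blast
  next
    case False
    have "x = a \<or> (x, x) \<in> (edges V H)\<^sup>+" by (rule sink_trancl[OF F_to no_out xx])
    then show False using False ac by blast
  qed
qed

lemma edge_in: "w \<noteq> a \<Longrightarrow> (u, w) \<in> edges X1 H' \<longleftrightarrow> (u, w) \<in> edges V H"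
  unfolding edges_eq by auto

lemma adj_eq: "u \<noteq> a \<Longrightarrow> w \<noteq> a \<Longrightarrow> adj X1 H' u w \<longleftrightarrow> adj V H u w"
  unfolding adj_def using edge_in by blast

lemma desc_eq: "a \<notin> Z \<Longrightarrow> desc X1 H' w \<inter> Z = desc V H w \<inter> Z"
proof -
  assume aZ: "a \<notin> Z"
  have "(edges V H)\<^sup>* \<subseteq> (edges V H \<union> F)\<^sup>*" by (rule rtrancl_mono) auto
  show ?thesis
  proof (intro equalityI subsetI)
    fix z assume "z \<in> desc X1 H' w \<inter> Z"
    then have z: "(w, z) \<in> (edges V H \<union> F)\<^sup>*" "z \<in> Z" unfolding desc_def edges_eq by auto
    have "z = a \<or> (w, z) \<in> (edges V H)\<^sup>*" by (rule sink_rtrancl[OF F_to no_out z(1)])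
    then show "z \<in> desc V H w \<inter> Z" using z(2) aZ unfolding desc_def by auto
  next
    fix z assume "z \<in> desc V H w \<inter> Z"
    then show "z \<in> desc X1 H' w \<inter> Z" using \<open>(edges V H)\<^sup>* \<subseteq> _\<close> unfolding desc_def edges_eq by auto
  qed
qed

lemma desc_a: "desc X1 H' a = {a}"
proof -
  have "z = a" if "(a, z) \<in> (edges V H \<union> F)\<^sup>*" for z
    using that by (cases rule: converse_rtranclE) (use no_out in auto)
  then show ?thesis unfolding desc_def edges_eq by auto
qed

lemma trail_eq:
  assumes "set p \<subseteq> V" "a \<notin> Z"
  shows "active_trail X1 H' Z p \<longleftrightarrow> active_trail V H Z p"
proof -
  have inV: "i < length p \<Longrightarrow> p ! i \<noteq> a" for i using assms aV nth_mem by blast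
  have c1: "(\<forall>i. Suc i < length p \<longrightarrow> adj X1 H' (p ! i) (p ! Suc i)) \<longleftrightarrow>
            (\<forall>i. Suc i < length p \<longrightarrow> adj V H (p ! i) (p ! Suc i))"
    using adj_eq inV by (metis Suc_lessD)
  have c2: "(\<forall>i. 0 < i \<and> Suc i < length p \<longrightarrow>
        (if (p ! (i - 1), p ! i) \<in> edges X1 H' \<and> (p ! Suc i, p ! i) \<in> edges X1 H'
         then desc X1 H' (p ! i) \<inter> Z \<noteq> {}
         else p ! i \<notin> Z)) \<longleftrightarrow>
      (\<forall>i. 0 < i \<and> Suc i < length p \<longrightarrow>
        (if (p ! (i - 1), p ! i) \<in> edges V H \<and> (p ! Suc i, p ! i) \<in> edges V H
         then desc V H (p ! i) \<inter> Z \<noteq> {}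
         else p ! i \<notin> Z))"
  proof -
    have "(if (p ! (i - 1), p ! i) \<in> edges X1 H' \<and> (p ! Suc i, p ! i) \<in> edges X1 H'
         then desc X1 H' (p ! i) \<inter> Z \<noteq> {}
         else p ! i \<notin> Z) \<longleftrightarrow> (if (p ! (i - 1), p ! i) \<in> edges V H \<and> (p ! Suc i, p ! i) \<in> edges V H
         then desc V H (p ! i) \<inter> Z \<noteq> {}
         else p ! i \<notin> Z)" if "Suc i < length p" for i
      using edge_in[OF inV[of i]] desc_eq[OF assms(2)] that by simp
    then show ?thesis by (intro all_cong1 imp_cong refl) auto
  qed
  show ?thesis unfolding active_trail_def c1 c2 using assms by auto
qed

lemma dsep_eq:
  assumes x: "x \<in> V" and y: "y \<in> V" and Z: "Z \<subseteq> V"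
  shows "dsep X1 H' x y Z \<longleftrightarrow> dsep V H x y Z"
proof -
  have aZ: "a \<notin> Z" using Z aV by auto
  have "set p \<subseteq> V" if p: "active_trail X1 H' Z p" "hd p = x" "last p = y" for p
  proof -
    have len: "length p \<ge> 2" and sp: "set p \<subseteq> X1" using p(1) unfolding active_trail_def by auto
    have "a \<notin> set p"
    proof
      assume "a \<in> set p"
      then obtain i where i: "i < length p" "p ! i = a" by (metis in_set_conv_nth)
      have ne: "p \<noteq> []" using len by auto
      have "i \<noteq> 0" using i p(2) x aV ne by (metis hd_conv_nth)
      moreover have "i \<noteq> length p - 1" using i p(3) y aV ne by (metis last_conv_nth)
      ultimately have i0: "0 < i" "Suc i < length p" using i by auto
      have "\<forall>j. Suc j < length p \<longrightarrow> adj X1 H' (p ! j) (p ! Suc j)"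
        using p(1) unfolding active_trail_def by blast
      moreover have "Suc (i - 1) < length p" using i0 by simp
      ultimately have "adj X1 H' (p ! (i - 1)) (p ! Suc (i - 1))" by blast
      moreover have "Suc (i - 1) = i" using i0 by simp
      ultimately have e1: "(p ! (i - 1), a) \<in> edges X1 H'"
        using i i0 no_out edges_eq unfolding adj_def by auto
      have "adj X1 H' (p ! i) (p ! Suc i)"
        using p(1) i0 unfolding active_trail_def by auto
      then have e2: "(p ! Suc i, a) \<in> edges X1 H'"
        using i no_out edges_eq unfolding adj_def by auto
      have "desc X1 H' (p ! i) \<inter> Z \<noteq> {}"
        using p(1) i0 e1 e2 i unfolding active_trail_def by force
      then show False using desc_a i aZ by simp
    qed
    then show ?thesis using sp by auto
  qed
  moreover have "set p \<subseteq> V" if "active_trail V H Z p" for p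
    using that unfolding active_trail_def by auto
  ultimately show ?thesis unfolding dsep_def using trail_eq aZ by metis
qed

end

lemma me_ext:
  assumes s1: "sinkext V H a Pa" and s2: "sinkext V H0 a Pa0"
    and me: "markov_equiv (insert a V) (H(a := Pa)) (H0(a := Pa0))"
  shows "markov_equiv V H H0"
  unfolding markov_equiv_def
proof (intro ballI allI impI)
  fix x y Z assume x: "x \<in> V" and y: "y \<in> V" and Z: "x \<noteq> y \<and> Z \<subseteq> V - {x, y}"
  have "dsep (insert a V) (H(a := Pa)) x y Z \<longleftrightarrow> dsep (insert a V) (H0(a := Pa0)) x y Z"
    by (rule me[unfolded markov_equiv_def, rule_format, of x y Z]) (use x y Z in auto)
  then show "dsep V H x y Z \<longleftrightarrow> dsep V H0 x y Z"
    using sinkext.dsep_eq[OF s1 x y] sinkext.dsep_eq[OF s2 x y] Z by auto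
qed


theorem theorem4:
  fixes k :: nat
    and X1 :: "'v set" and Xa Xb :: 'v
    and D1 D2 :: "('v \<Rightarrow> 'a) pmf"
    and \<alpha> \<beta> lam \<gamma> :: real
  assumes k_pos: "0 < k"
    and fin_X1: "finite X1" and card_X1: "card X1 \<ge> k"
    and Xa_in: "Xa \<in> X1" and Xb_notin: "Xb \<notin> X1"
    and fin_D1: "finite (set_pmf D1)"
    and \<alpha>_pos: "0 < \<alpha>" and \<beta>_pos: "0 < \<beta>"
    and I: "\<exists>G1. unique_opt_EC_gap_ge k D1 X1 G1 \<beta> \<and>
              (\<forall>G. is_dag k X1 G \<and> markov_equiv X1 G G1 \<longrightarrow> (\<forall>v\<in>X1. Xa \<notin> G v))"
    and III: "cond_ent D1 Xa (X1 - {Xa}) = \<alpha>"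
    and lam_pos: "0 < lam" and lam_lt_\<alpha>: "lam < \<alpha>"
    and lam_lt_\<beta>: "lam < \<beta> / (3 * real (card (insert Xb X1)))"
    and fin_D2: "finite (set_pmf D2)"
    and marg_D2: "marg D2 X1 = marg D1 X1"
    and IV: "\<exists>Q :: (bool \<times> ('v \<Rightarrow> 'a)) pmf.
              map_pmf snd Q = D2 \<and>
              (\<forall>x1. measure_pmf.prob Q {(c, \<omega>). c \<and> proj X1 \<omega> = x1}
                     = measure_pmf.prob Q {(c, \<omega>). c} * measure_pmf.prob Q {(c, \<omega>). proj X1 \<omega> = x1}) \<and>
              (\<forall>(c, \<omega>)\<in>set_pmf Q. c \<longrightarrow> \<omega> Xb = \<omega> Xa) \<and>
              (\<forall>x1 b. measure_pmf.prob Q {(c, \<omega>). \<not> c \<and> proj X1 \<omega> = x1 \<and> \<omega> Xb = b}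
                       * measure_pmf.prob Q {(c, \<omega>). \<not> c}
                     = measure_pmf.prob Q {(c, \<omega>). \<not> c \<and> proj X1 \<omega> = x1}
                       * measure_pmf.prob Q {(c, \<omega>). \<not> c \<and> \<omega> Xb = b})"
    and V: "max (cond_ent D2 Xb {Xa}) (cond_ent D2 Xa {Xb}) = lam"
    and \<gamma>_pos: "0 < \<gamma>"
    and \<gamma>_le: "\<gamma> \<le> \<beta> - 3 * real (card (insert Xb X1)) * lam"
  shows "stable k (insert Xb X1) D2 \<gamma> (X1 - {Xa})"
proof -
  let ?X = "insert Xb X1" and ?V = "X1 - {Xa}"
  define d where "d = card ?X"
  obtain G1 where G1opt: "unique_opt_EC_gap_ge k D1 X1 G1 \<beta>"
    and G1noch: "\<forall>G. is_dag k X1 G \<and> markov_equiv X1 G G1 \<longrightarrow> (\<forall>v\<in>X1. Xa \<notin> G v)"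
    using I by blast
  have G1dag: "is_dag k X1 G1"
    and G1max: "\<forall>G. is_dag k X1 G \<longrightarrow> score D1 X1 G \<le> score D1 X1 G1"
    and G1eq: "\<forall>G. is_dag k X1 G \<and> score D1 X1 G = score D1 X1 G1 \<longrightarrow> markov_equiv X1 G G1"
    and G1gap: "\<forall>G. is_dag k X1 G \<and> \<not> markov_equiv X1 G G1 \<longrightarrow> score D1 X1 G \<le> score D1 X1 G1 - \<beta>"
    using G1opt unfolding unique_opt_EC_gap_ge_def by auto
  have meref: "markov_equiv X1 G1 G1" unfolding markov_equiv_def by simp
  have G1Xa: "\<forall>v\<in>X1. Xa \<notin> G1 v" using G1noch G1dag meref by blast
  have G1sub: "\<And>v. v \<in> X1 \<Longrightarrow> G1 v \<subseteq> X1 - {v} \<and> card (G1 v) \<le> k"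
    and G1out: "\<And>v. v \<notin> X1 \<Longrightarrow> G1 v = {}" and G1ac: "acyclic (edges X1 G1)"
    using G1dag unfolding is_dag_def by auto
  have hba: "cond_ent D2 Xb {Xa} \<le> lam" and hab: "cond_ent D2 Xa {Xb} \<le> lam" using V by auto
  have XaXb: "Xa \<noteq> Xb" using Xa_in Xb_notin by auto
  have finX: "finite ?X" using fin_X1 by simp
  have X1eq: "insert Xa ?V = X1" using Xa_in by auto
  have sumX1: "(\<Sum>v\<in>X1. f v) = f Xa + (\<Sum>v\<in>?V. f v)" for f :: "'v \<Rightarrow> real"
    by (rule sum.remove[OF fin_X1 Xa_in])
  have cardV: "card X1 = Suc (card ?V)" using card_Suc_Diff1[OF fin_X1 Xa_in] by simp
  have d_eq: "d = card ?V + 2" unfolding d_def using cardV fin_X1 Xb_notin by simp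
  have condT: "\<And>v S. insert v S \<subseteq> X1 \<Longrightarrow> cond_ent D2 v S = cond_ent D1 v S"
    using cond_transfer[OF marg_D2] by blast
  have scoreT: "score D2 X1 G = score D1 X1 G" if "is_dag k X1 G" for G
  proof -
    have "\<And>v. v \<in> X1 \<Longrightarrow> insert v (G v) \<subseteq> X1" using that Xa_in unfolding is_dag_def by blast
    then show ?thesis unfolding score_def using condT by (intro arg_cong[where f=uminus] sum.cong) auto
  qed
  have lampos: "0 < real d * lam" using lam_pos d_eq by simp
  have d2: "2 * lam \<le> real d * lam" using lam_pos d_eq by simp
  have gam_lt: "\<gamma> < \<beta>" using \<gamma>_le lampos unfolding d_def by simp
  define G1e where "G1e = G1(Xb := {Xa})"
  have se1: "sinkext X1 G1 Xb {Xa}"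
    by unfold_locales (use G1sub G1out Xb_notin Xa_in in auto)
  have G1e_dag: "is_dag k ?X G1e"
    unfolding is_dag_def G1e_def
  proof (intro conjI ballI allI impI)
    show "acyclic (edges ?X (G1(Xb := {Xa})))" by (rule sinkext.acyclic_ext[OF se1 G1ac])
  next
    fix v assume "v \<in> ?X"
    then show "(G1(Xb := {Xa})) v \<subseteq> ?X - {v}" "card ((G1(Xb := {Xa})) v) \<le> k"
      using G1sub XaXb Xa_in k_pos by auto
  next
    fix v assume "v \<notin> ?X" then show "(G1(Xb := {Xa})) v = {}" using G1out by auto
  qed
  have "score D2 ?X G1e = score D2 X1 G1 - cond_ent D2 Xb {Xa}"
  proof -
    have "score D2 ?X G1e = - (cond_ent D2 Xb {Xa} + (\<Sum>v\<in>X1. cond_ent D2 v (G1e v)))"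
      unfolding score_def using fin_X1 Xb_notin by (simp add: G1e_def)
    also have "(\<Sum>v\<in>X1. cond_ent D2 v (G1e v)) = (\<Sum>v\<in>X1. cond_ent D2 v (G1 v))"
      using Xb_notin by (intro sum.cong) (auto simp: G1e_def)
    finally show ?thesis unfolding score_def by simp
  qed
  then have best_ge: "score D1 X1 G1 - lam \<le> best_score k D2 ?X"
    using best_score_ge[OF finX G1e_dag, of D2] scoreT[OF G1dag] hba by linarith
  show ?thesis unfolding stable_def
  proof (intro conjI allI impI ballI)
    fix G v assume Gh: "is_dag k ?X G \<and> best_score k D2 ?X - \<gamma> \<le> score D2 ?X G" and v: "v \<in> ?V"
    show "G v \<subseteq> ?V"
    proof (rule ccontr)
      assume bad: "\<not> G v \<subseteq> ?V"
      have Gsub: "\<And>u. u \<in> ?X \<Longrightarrow> G u \<subseteq> ?X - {u} \<and> card (G u) \<le> k"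
        and Gout: "\<And>u. u \<notin> ?X \<Longrightarrow> G u = {}" and Gac: "acyclic (edges ?X G)"
        using Gh unfolding is_dag_def by auto
      have vX: "v \<in> ?X" using v by auto
      have bad2: "Xa \<in> G v \<or> Xb \<in> G v" using bad Gsub[OF vX] by auto
      let ?E = "edges ?X G"
      have Eiff: "\<And>u w. (u, w) \<in> ?E \<longleftrightarrow> w \<in> ?X \<and> u \<in> G w" unfolding edges_def by auto
      define rep where "rep P = (if Xb \<in> P then insert Xa (P - {Xb}) else P)" for P
      define c where "c = ((Xb, Xa) \<in> ?E\<^sup>*)"
      define G' where "G' u = (if u \<in> ?V then rep (G u) else if u = Xa then (if c then G Xb else G Xa) else {})" for u
      have finG: "finite (G u)" for u
      proof (cases "u \<in> ?X")
        case True then show ?thesis using Gsub[OF True] finX by (meson finite_Diff finite_subset)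
      next
        case False then show ?thesis using Gout by simp
      qed
      have XaGXb: "c \<Longrightarrow> Xa \<notin> G Xb"
      proof
        assume c: c and "Xa \<in> G Xb"
        then have "(Xa, Xb) \<in> ?E" using Eiff by auto
        then have "(Xa, Xa) \<in> ?E\<^sup>+" using c unfolding c_def by (meson rtrancl_into_trancl2)
        then show False using Gac unfolding acyclic_def by blast
      qed
      have XbGXa: "\<not> c \<Longrightarrow> Xb \<notin> G Xa"
      proof
        assume c: "\<not> c" and "Xb \<in> G Xa"
        then have "(Xb, Xa) \<in> ?E" using Eiff Xa_in by auto
        then show False using c unfolding c_def by auto
      qed
      have G'dag: "is_dag k X1 G'"
        unfolding is_dag_def
      proof (intro conjI)
       show "\<forall>u\<in>X1. G' u \<subseteq> X1 - {u} \<and> card (G' u) \<le> k"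
       proof
        fix u assume u: "u \<in> X1"
        show "G' u \<subseteq> X1 - {u} \<and> card (G' u) \<le> k"
        proof (cases "u \<in> ?V")
          case True
          have s: "G u \<subseteq> ?X - {u}" "card (G u) \<le> k" using Gsub u by auto
          have "rep (G u) \<subseteq> X1 - {u}" using s True Xa_in unfolding rep_def by auto
          moreover have "card (rep (G u)) \<le> card (G u)"
          proof (cases "Xb \<in> G u")
            case True
            then have "card (insert Xa (G u - {Xb})) \<le> Suc (card (G u - {Xb}))" by (simp add: card_insert_le_m1 card_insert_if)
            also have "\<dots> = card (G u)" using card_Suc_Diff1[OF finG True] by simp
            finally show ?thesis unfolding rep_def using True by simp
          qed (simp add: rep_def)
          ultimately show ?thesis using True s unfolding G'_def by simp
        next
          case False
          then have uXa: "u = Xa" using u by auto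
          show ?thesis
          proof (cases c)
            case True
            then show ?thesis using Gsub[of Xb] XaGXb uXa unfolding G'_def by auto
          next
            case False
            then show ?thesis using Gsub[of Xa] XbGXa uXa Xa_in unfolding G'_def by auto
          qed
        qed
       qed
      next
        show "\<forall>u. u \<notin> X1 \<longrightarrow> G' u = {}" using Xa_in unfolding G'_def by auto
      next
        show "acyclic (edges X1 G')"
        proof (cases c)
          case False
          have R: "acyclic (insert (Xa, Xb) ?E)" using Gac False unfolding c_def acyclic_insert by simp
          show ?thesis
          proof (rule acyclic_via_map[OF R, where f=id])
            fix u w assume "(u, w) \<in> edges X1 G'"
            then have w: "w \<in> X1" and uw: "u \<in> G' w" unfolding edges_def by auto
            show "(id u, id w) \<in> (insert (Xa, Xb) ?E)\<^sup>+"
            proof (cases "w \<in> ?V")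
              case True
              then have u': "u \<in> rep (G w)" using uw unfolding G'_def by simp
              show ?thesis
              proof (cases "Xb \<in> G w \<and> u = Xa")
                case True
                then have "(Xa, Xb) \<in> insert (Xa, Xb) ?E" "(Xb, w) \<in> insert (Xa, Xb) ?E" using Eiff w by auto
                then have "(Xa, w) \<in> (insert (Xa, Xb) ?E)\<^sup>+" by (meson r_into_trancl trancl_into_trancl)
                then show ?thesis using True by simp
              next
                case False
                then have "u \<in> G w" using u' unfolding rep_def by (auto split: if_splits)
                then show ?thesis using Eiff w by auto
              qed
            next
              case False
              then have "w = Xa" "u \<in> G Xa" using w uw \<open>\<not> c\<close> unfolding G'_def by auto
              then show ?thesis using Eiff Xa_in by auto
            qed
          qed
        next
          case True
          show ?thesis
          proof (rule acyclic_via_map[OF Gac, where f="\<lambda>x. if x = Xa then Xb else if x = Xb then Xa else x"])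
            fix u w assume "(u, w) \<in> edges X1 G'"
            then have w: "w \<in> X1" and uw: "u \<in> G' w" unfolding edges_def by auto
            show "((\<lambda>x. if x = Xa then Xb else if x = Xb then Xa else x) u,
                   (\<lambda>x. if x = Xa then Xb else if x = Xb then Xa else x) w) \<in> ?E\<^sup>+"
            proof (cases "w \<in> ?V")
              case wV: True
              then have fw: "(if w = Xa then Xb else if w = Xb then Xa else w) = w" using Xb_notin by auto
              have u': "u \<in> rep (G w)" using uw wV unfolding G'_def by simp
              show ?thesis
              proof (cases "u = Xa")
                case True
                have "(Xb, w) \<in> ?E\<^sup>+"
                proof (cases "Xb \<in> G w")
                  case True then show ?thesis using Eiff w by auto
                next
                  case False
                  then have "Xa \<in> G w" using u' \<open>u = Xa\<close> unfolding rep_def by simp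
                  then have "(Xa, w) \<in> ?E" using Eiff w by auto
                  then show ?thesis using \<open>c\<close> unfolding c_def by (meson rtrancl_into_trancl1)
                qed
                then show ?thesis using True fw by simp
              next
                case False
                then have "u \<in> G w" "u \<noteq> Xb" using u' unfolding rep_def by (auto split: if_splits)
                then show ?thesis using False fw Eiff w by auto
              qed
            next
              case False
              then have wa: "w = Xa" and u: "u \<in> G Xb" using w uw \<open>c\<close> unfolding G'_def by auto
              have "u \<noteq> Xb" using Gsub[of Xb] u by auto
              moreover have "u \<noteq> Xa" using XaGXb[OF \<open>c\<close>] u by auto
              moreover have "(u, Xb) \<in> ?E" using Eiff u by auto
              ultimately show ?thesis using wa XaXb by auto
            qed
          qed
        qed
      qed
      have G'bad: "Xa \<in> G' v" using bad2 v unfolding G'_def rep_def by auto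
      have notme: "\<not> markov_equiv X1 G' G1"
      proof
        assume "markov_equiv X1 G' G1"
        then have "\<forall>u\<in>X1. Xa \<notin> G' u" using G1noch G'dag by blast
        then show False using G'bad v by auto
      qed
      have sc1: "score D2 X1 G' \<le> score D1 X1 G1 - \<beta>" using G1gap G'dag notme scoreT[OF G'dag] by auto
      have sumb: "(\<Sum>u\<in>?V. cond_ent D2 u (G' u)) \<le> (\<Sum>u\<in>?V. cond_ent D2 u (G u)) + real (card ?V) * lam"
      proof -
        have "(\<Sum>u\<in>?V. cond_ent D2 u (G' u)) \<le> (\<Sum>u\<in>?V. cond_ent D2 u (G u) + lam)"
        proof (rule sum_mono)
          fix u assume u: "u \<in> ?V"
          show "cond_ent D2 u (G' u) \<le> cond_ent D2 u (G u) + lam"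
          proof (cases "Xb \<in> G u")
            case True
            have "cond_ent D2 u (insert Xa (G u - {Xb})) \<le> cond_ent D2 u (G u) + cond_ent D2 Xb {Xa}"
              by (rule cond_repl[OF fin_D2]) (use u XaXb True in auto)
            then show ?thesis using True u hba unfolding G'_def rep_def by simp
          next
            case False then show ?thesis using u lam_pos unfolding G'_def rep_def by simp
          qed
        qed
        then show ?thesis by (simp add: sum.distrib)
      qed
      have Xdec: "?X = insert Xb (insert Xa ?V)" using Xa_in by auto
      have scG: "score D2 ?X G = - (cond_ent D2 Xb (G Xb) + cond_ent D2 Xa (G Xa) + (\<Sum>u\<in>?V. cond_ent D2 u (G u)))"
      proof -
        have fV: "finite ?V" using fin_X1 by simp
        have nV: "Xa \<notin> ?V" by simp
        have nV2: "Xb \<notin> insert Xa ?V" using Xb_notin XaXb by simp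
        show ?thesis unfolding score_def Xdec sum.insert[OF finite.insertI[OF fV] nV2] sum.insert[OF fV nV]
          by simp
      qed
      have scG': "score D2 X1 G' = - (cond_ent D2 Xa (G' Xa) + (\<Sum>u\<in>?V. cond_ent D2 u (G' u)))"
        unfolding score_def sumX1 by simp
      have xa_bound: "cond_ent D2 Xa (G' Xa) \<le> cond_ent D2 Xb (G Xb) + cond_ent D2 Xa (G Xa) + lam"
      proof (cases c)
        case True
        have "cond_ent D2 Xa (G Xb) \<le> cond_ent D2 Xb (G Xb) + cond_ent D2 Xa {Xb}"
          by (rule cond_swap[OF fin_D2 XaXb XaGXb[OF True]])
        then show ?thesis using True hab cond_nonneg[OF fin_D2, of Xa "G Xa"] unfolding G'_def by simp
      next
        case False
        then show ?thesis using lam_pos cond_nonneg[OF fin_D2, of Xb "G Xb"] unfolding G'_def by simp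
      qed
      have "score D2 ?X G \<le> score D2 X1 G' + (real (card ?V) + 1) * lam"
        using scG scG' sumb xa_bound by (simp add: algebra_simps)
      also have "(real (card ?V) + 1) * lam \<le> real d * lam" using d_eq lam_pos by simp
      finally have "score D2 ?X G \<le> score D1 X1 G1 - \<beta> + real d * lam" using sc1 by linarith
      moreover have "score D1 X1 G1 - lam - \<gamma> \<le> score D2 ?X G" using Gh best_ge by linarith
      ultimately show False using \<gamma>_le d2 lam_pos unfolding d_def by linarith
    qed
  next
    define G0 where "G0 = G1(Xa := {})"
    have G1G0: "G0(Xa := G1 Xa) = G1" unfolding G0_def by simp
    have G1XaV: "G1 Xa \<subseteq> ?V" using G1sub[OF Xa_in] by auto
    have G0sub: "\<And>v. v \<in> ?V \<Longrightarrow> G0 v \<subseteq> ?V - {v} \<and> card (G0 v) \<le> k"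
    proof -
      fix v assume v: "v \<in> ?V"
      then have "G1 v \<subseteq> X1 - {v}" "card (G1 v) \<le> k" "Xa \<notin> G1 v" using G1sub G1Xa by auto
      then show "G0 v \<subseteq> ?V - {v} \<and> card (G0 v) \<le> k" using v unfolding G0_def by auto
    qed
    have G0out: "\<And>v. v \<notin> ?V \<Longrightarrow> G0 v = {}" using G1out unfolding G0_def by auto
    have se0: "sinkext ?V G0 Xa (G1 Xa)"
      by unfold_locales (use G0sub G0out G1XaV in auto)
    have G0dag: "is_dag k ?V G0"
      unfolding is_dag_def
    proof (intro conjI ballI allI impI)
      show "acyclic (edges ?V G0)"
        by (rule acyclic_subset[OF G1ac]) (auto simp: edges_def G0_def)
    qed (use G0sub G0out in auto)
    have ext: "is_dag k X1 (G(Xa := G1 Xa)) \<and> sinkext ?V G Xa (G1 Xa) \<and>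
        score D1 X1 (G(Xa := G1 Xa)) = score (marg D2 ?V) ?V G - cond_ent D1 Xa (G1 Xa)"
      if Gd: "is_dag k ?V G" for G
    proof (intro conjI)
      have Gs: "\<And>v. v \<in> ?V \<Longrightarrow> G v \<subseteq> ?V - {v} \<and> card (G v) \<le> k"
        and Go: "\<And>v. v \<notin> ?V \<Longrightarrow> G v = {}" and Ga: "acyclic (edges ?V G)"
        using Gd unfolding is_dag_def by auto
      show se: "sinkext ?V G Xa (G1 Xa)"
        by unfold_locales (use Gs Go G1XaV in auto)
      show "is_dag k X1 (G(Xa := G1 Xa))"
        unfolding is_dag_def
      proof (intro conjI)
        show "acyclic (edges X1 (G(Xa := G1 Xa)))"
          using sinkext.acyclic_ext[OF se Ga] X1eq by simp
      next
        show "\<forall>v\<in>X1. (G(Xa := G1 Xa)) v \<subseteq> X1 - {v} \<and> card ((G(Xa := G1 Xa)) v) \<le> k"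
        proof
          fix v assume "v \<in> X1"
          then show "(G(Xa := G1 Xa)) v \<subseteq> X1 - {v} \<and> card ((G(Xa := G1 Xa)) v) \<le> k"
            using Gs G1sub[OF Xa_in] by (cases "v = Xa") auto
        qed
      next
        show "\<forall>v. v \<notin> X1 \<longrightarrow> (G(Xa := G1 Xa)) v = {}" using Go Xa_in by auto
      qed
      have "score D1 X1 (G(Xa := G1 Xa)) = - (cond_ent D1 Xa (G1 Xa) + (\<Sum>u\<in>?V. cond_ent D1 u (G u)))"
        unfolding score_def sumX1 by simp
      also have "(\<Sum>u\<in>?V. cond_ent D1 u (G u)) = (\<Sum>u\<in>?V. cond_ent (marg D2 ?V) u (G u))"
      proof (rule sum.cong[OF refl])
        fix u assume u: "u \<in> ?V"
        have s1: "insert u (G u) \<subseteq> ?V" using Gs u by auto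
        then have s2: "insert u (G u) \<subseteq> X1" by auto
        show "cond_ent D1 u (G u) = cond_ent (marg D2 ?V) u (G u)"
          using cond_ent_marg[OF s1, of D2] condT[OF s2] by simp
      qed
      finally have "score D1 X1 (G(Xa := G1 Xa)) = - (cond_ent D1 Xa (G1 Xa) + (\<Sum>u\<in>?V. cond_ent (marg D2 ?V) u (G u)))" .
      moreover have "score (marg D2 ?V) ?V G = - (\<Sum>u\<in>?V. cond_ent (marg D2 ?V) u (G u))"
        unfolding score_def ..
      ultimately show "score D1 X1 (G(Xa := G1 Xa)) = score (marg D2 ?V) ?V G - cond_ent D1 Xa (G1 Xa)"
        by linarith
    qed
    have s0: "score D1 X1 G1 = score (marg D2 ?V) ?V G0 - cond_ent D1 Xa (G1 Xa)"
      using ext[OF G0dag] unfolding G1G0 by blast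
    have X1G0: "markov_equiv X1 H G1 \<Longrightarrow> markov_equiv (insert Xa ?V) H (G0(Xa := G1 Xa))" for H
      unfolding X1eq G1G0 .
    show "\<exists>G0. unique_opt_EC_gap_gt k (marg D2 ?V) ?V G0 \<gamma>"
    proof (intro exI[of _ G0])
      show "unique_opt_EC_gap_gt k (marg D2 ?V) ?V G0 \<gamma>"
        unfolding unique_opt_EC_gap_gt_def
      proof (intro conjI allI impI)
        show "is_dag k ?V G0" by (rule G0dag)
      next
        fix G assume Gd: "is_dag k ?V G"
        have e: "is_dag k X1 (G(Xa := G1 Xa))" "sinkext ?V G Xa (G1 Xa)"
          "score D1 X1 (G(Xa := G1 Xa)) = score (marg D2 ?V) ?V G - cond_ent D1 Xa (G1 Xa)"
          using ext[OF Gd] by auto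
        have "score D1 X1 (G(Xa := G1 Xa)) \<le> score D1 X1 G1" using G1max e(1) by blast
        then show "score (marg D2 ?V) ?V G \<le> score (marg D2 ?V) ?V G0" using e(3) s0 by linarith
      next
        fix G assume a: "is_dag k ?V G \<and> score (marg D2 ?V) ?V G = score (marg D2 ?V) ?V G0"
        have e: "is_dag k X1 (G(Xa := G1 Xa))" "sinkext ?V G Xa (G1 Xa)"
          "score D1 X1 (G(Xa := G1 Xa)) = score (marg D2 ?V) ?V G - cond_ent D1 Xa (G1 Xa)"
          using ext a by auto
        have "score D1 X1 (G(Xa := G1 Xa)) = score D1 X1 G1" using e(3) s0 a by linarith
        then have "markov_equiv X1 (G(Xa := G1 Xa)) G1" using G1eq e(1) by blast
        then have "markov_equiv (insert Xa ?V) (G(Xa := G1 Xa)) (G0(Xa := G1 Xa))" by (rule X1G0)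
        then show "markov_equiv ?V G G0" by (rule me_ext[OF e(2) se0])
      next
        fix G assume a: "is_dag k ?V G \<and> \<not> markov_equiv ?V G G0"
        have e: "is_dag k X1 (G(Xa := G1 Xa))" "sinkext ?V G Xa (G1 Xa)"
          "score D1 X1 (G(Xa := G1 Xa)) = score (marg D2 ?V) ?V G - cond_ent D1 Xa (G1 Xa)"
          using ext a by auto
        have "\<not> markov_equiv X1 (G(Xa := G1 Xa)) G1"
        proof
          assume "markov_equiv X1 (G(Xa := G1 Xa)) G1"
          then have "markov_equiv (insert Xa ?V) (G(Xa := G1 Xa)) (G0(Xa := G1 Xa))" by (rule X1G0)
          then have "markov_equiv ?V G G0" by (rule me_ext[OF e(2) se0])
          then show False using a by blast
        qed
        then have "score D1 X1 (G(Xa := G1 Xa)) \<le> score D1 X1 G1 - \<beta>" using G1gap e(1) by blast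
        then show "score (marg D2 ?V) ?V G < score (marg D2 ?V) ?V G0 - \<gamma>"
          using e(3) s0 gam_lt by linarith
      qed
    qed
  qed
qed
end
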